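(* Let $\gamma$ be a real number with $0<\gamma<1$. Then there exist an infinite binary sequence $\omega=\omega_0\omega_1\omega_2\ldots$ and an integer $N$ such that for every finite set $A\subset\mathbb{N}$ with $\#A\ge N$ there exists $t\in A$ with $$K(A,\omega(A)\mid t)\ \ge\ \gamma\cdot \#A .$$
   Context: $K(\cdot\mid\cdot)$ denotes conditional prefix Kolmogorov complexity; finite subsets of $\mathbb{N}$, natural numbers and binary strings are encoded as finite objects in a standard computable way, and $K(A,\omega(A)\mid t)$ is the complexity of the pair $(A,\omega(A))$ given $t$. For an infinite binary sequence $\omega$ and a finite set $A\subset\mathbb{N}$, $\omega(A)$ denotes the binary string of length $\#A$ formed by the bits $\omega_i$, $i\in A$, listed in increasing order of $i$. *)

theory Defs
  imports Complex_Main "HOL-Library.Nat_Bijection" "HOL-Library.Extended_Nat"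
begin

datatype recf =
    Zero
  | Succ
  | Proj nat
  | Comp recf "recf list"
  | Prim recf recf
  | Minim recf

inductive reval :: "recf \<Rightarrow> nat list \<Rightarrow> nat \<Rightarrow> bool" where
  zero: "reval Zero xs 0"
| succ: "reval Succ (x # xs) (Suc x)"
| proj: "i < length xs \<Longrightarrow> reval (Proj i) xs (xs ! i)"
| comp: "length ys = length gs \<Longrightarrow> (\<forall>i < length gs. reval (gs ! i) xs (ys ! i))
          \<Longrightarrow> reval f ys z \<Longrightarrow> reval (Comp f gs) xs z"
| prim0: "reval f xs y \<Longrightarrow> reval (Prim f g) (0 # xs) y"
| primS: "reval (Prim f g) (n # xs) y \<Longrightarrow> reval g (y # n # xs) z
          \<Longrightarrow> reval (Prim f g) (Suc n # xs) z"
| minim: "reval f (n # xs) 0 \<Longrightarrow> (\<forall>m < n. \<exists>y. y \<noteq> 0 \<and> reval f (m # xs) y)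
          \<Longrightarrow> reval (Minim f) xs n"

text \<open>Bijective encoding of binary strings by natural numbers.\<close>
fun str_code :: "bool list \<Rightarrow> nat" where
  "str_code [] = 0"
| "str_code (b # bs) = 2 * str_code bs + (if b then 2 else 1)"

definition set_code :: "nat set \<Rightarrow> nat" where
  "set_code A = (\<Sum>i\<in>A. 2 ^ i)"

text \<open>omega(A): bits of omega at positions in A, in increasing order.\<close>
definition restr :: "(nat \<Rightarrow> bool) \<Rightarrow> nat set \<Rightarrow> bool list" where
  "restr \<omega> A = map \<omega> (sorted_list_of_set A)"

text \<open>A conditional machine: a partial recursive function M(p, y) of the program p
  (a binary string, coded) and the condition y.\<close>
definition prefix_machine :: "recf \<Rightarrow> bool" where
  "prefix_machine M \<longleftrightarrow>
     (\<forall>y p q x x'. reval M [str_code p, y] x \<and> reval M [str_code q, y] x'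
        \<and> (\<exists>r. q = p @ r) \<longrightarrow> p = q)"

definition KC :: "recf \<Rightarrow> nat \<Rightarrow> nat \<Rightarrow> enat" where
  "KC M x y = (INF p \<in> {p. reval M [str_code p, y] x}. enat (length p))"

definition optimal_prefix_machine :: "recf \<Rightarrow> bool" where
  "optimal_prefix_machine U \<longleftrightarrow> prefix_machine U \<and>
     (\<forall>M. prefix_machine M \<longrightarrow> (\<exists>c::nat. \<forall>x y. KC U x y \<le> KC M x y + enat c))"

end

theory Submission
  imports Defs
begin

lemma reval_fun: "reval f xs y \<Longrightarrow> reval f xs z \<Longrightarrow> y = z"
proof (induct arbitrary: z rule: reval.induct)
  case (zero xs) from zero.prems show ?case by (cases rule: reval.cases) auto
next
  case (succ x xs) from succ.prems show ?case by (cases rule: reval.cases) auto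
next
  case (proj i xs) from proj.prems show ?case by (cases rule: reval.cases) auto
next
  case (comp ys gs xs f z z')
  note C = comp.hyps
  from comp.prems show ?case
  proof (cases rule: reval.cases)
    case (comp ys')
    have "ys = ys'"
    proof (rule nth_equalityI)
      show "length ys = length ys'" using C(1) comp by simp
      fix i assume "i < length ys"
      then have "i < length gs" using C(1) by simp
      have h1: "\<forall>w. reval (gs ! i) xs w \<longrightarrow> ys ! i = w" using C(2) \<open>i < length gs\<close> by simp
      have h2: "reval (gs ! i) xs (ys' ! i)" using comp \<open>i < length gs\<close> by simp
      show "ys ! i = ys' ! i" using h1 h2 by simp
    qed
    then show ?thesis using C comp by auto
  qed
next
  case (prim0 f xs y g) from prim0.prems show ?case by (cases rule: reval.cases) (use prim0.hyps in auto)
next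
  case (primS f g n xs y z) 
  from primS.prems show ?case
    by (cases rule: reval.cases) (use primS.hyps in auto)
next
  case (minim f n xs)
  note M = minim.hyps
  from minim.prems show ?case
  proof (cases rule: reval.cases)
    case minim
    note M2 = this
    show ?thesis
    proof (rule ccontr)
      assume "n \<noteq> z"
      then consider "n < z" | "z < n" by linarith
      then show False
      proof cases
        case 1
        with M2(2) obtain y where "y \<noteq> 0" "reval f (n # xs) y" by auto
        with M(2) show False by auto
      next
        case 2
        with M(3) obtain y where "y \<noteq> 0" "reval f (z # xs) y" "\<forall>w. reval f (z # xs) w \<longrightarrow> y = w" by blast
        with M2(1) show False by auto
      qed
    qed
  qed
qed

lemma pow2_sum_less: "(\<Sum>i\<le>c. (2::nat)^i) < 2 ^ Suc c"
  by (induction c) auto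

lemma KC_count:
  shows "finite {x. KC U x t < enat c} \<and> card {x. KC U x t < enat c} \<le> 2 ^ Suc c"
proof -
  define out where "out p = (THE x. reval U [str_code p, t] x)" for p
  define L where "L = {xs::bool list. set xs \<subseteq> UNIV \<and> length xs \<le> c}"
  have sub: "{x. KC U x t < enat c} \<subseteq> out ` L"
  proof
    fix x assume "x \<in> {x. KC U x t < enat c}"
    then have "(INF p \<in> {p. reval U [str_code p, t] x}. enat (length p)) < enat c"
      by (simp add: KC_def)
    then obtain p where p: "reval U [str_code p, t] x" "enat (length p) < enat c"
      by (auto simp: INF_less_iff)
    have "out p = x" unfolding out_def
      using p(1) reval_fun by blast
    moreover have "p \<in> L" using p(2) by (simp add: L_def)
    ultimately show "x \<in> out ` L" by blast
  qed
  have finL: "finite L" unfolding L_def by (rule finite_lists_length_le) simp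
  have cL: "card L = (\<Sum>i\<le>c. 2^i)" unfolding L_def
    by (subst card_lists_length_le) simp_all
  have "card {x. KC U x t < enat c} \<le> card (out ` L)"
    by (rule card_mono) (use finL sub in auto)
  also have "\<dots> \<le> card L" by (rule card_image_le[OF finL])
  also have "\<dots> \<le> 2 ^ Suc c" using cL pow2_sum_less[of c] by simp
  finally show ?thesis using finite_subset[OF sub] finL by blast
qed


definition asg :: "nat set \<Rightarrow> (nat \<Rightarrow> bool) set" where
  "asg S = {x. \<forall>i. i \<notin> S \<longrightarrow> \<not> x i}"

definition goodF :: "(nat set \<times> bool list) set \<Rightarrow> nat set \<Rightarrow> (nat \<Rightarrow> bool) \<Rightarrow> bool" where
  "goodF F S x \<longleftrightarrow> (\<forall>A s. (A, s) \<in> F \<longrightarrow> A \<subseteq> S \<longrightarrow> restr x A \<noteq> s)"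

definition Zc :: "(nat set \<times> bool list) set \<Rightarrow> nat set \<Rightarrow> nat" where
  "Zc F S = card {x \<in> asg S. goodF F S x}"

lemma finite_asg: "finite S \<Longrightarrow> finite (asg S)"
proof -
  assume "finite S"
  have "asg S \<subseteq> (\<lambda>B i. i \<in> B) ` Pow S"
  proof
    fix x assume "x \<in> asg S"
    then have "{i. x i} \<in> Pow S" "x = (\<lambda>i. i \<in> {i. x i})" by (auto simp: asg_def)
    then show "x \<in> (\<lambda>B i. i \<in> B) ` Pow S" by blast
  qed
  then show ?thesis using \<open>finite S\<close> finite_subset by blast
qed

lemma restr_cong: "finite A \<Longrightarrow> (\<forall>i\<in>A. x i = y i) \<Longrightarrow> restr x A = restr y A"
  unfolding restr_def by (auto intro: map_cong)

lemma restr_eqD: "finite A \<Longrightarrow> restr x A = restr y A \<Longrightarrow> i \<in> A \<Longrightarrow> x i = y i"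
  unfolding restr_def by (auto simp: map_eq_conv)

lemma goodF_mono: "T \<subseteq> S \<Longrightarrow> goodF F S x \<Longrightarrow> goodF F T x"
  unfolding goodF_def by blast

lemma goodF_cong:
  assumes F: "\<forall>(A,s)\<in>F. finite A" and "\<forall>i\<in>S. x i = y i" and "goodF F S x"
  shows "goodF F S y"
  unfolding goodF_def
proof (intro allI impI)
  fix A s assume "(A, s) \<in> F" "A \<subseteq> S"
  then have "restr x A = restr y A" using F assms(2) by (intro restr_cong) auto
  then show "restr y A \<noteq> s" using assms(3) \<open>(A, s) \<in> F\<close> \<open>A \<subseteq> S\<close> unfolding goodF_def by auto
qed

lemma Zc_empty:
  assumes "\<forall>(A,s)\<in>F. A \<noteq> {}"
  shows "Zc F {} = 1"
proof -
  have "{x \<in> asg {}. goodF F {} x} = {\<lambda>_. False}"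
    using assms by (auto simp: asg_def goodF_def)
  then show ?thesis by (simp add: Zc_def)
qed

lemma lll_step:
  fixes lam :: real
  assumes F: "\<forall>(A,s)\<in>F. finite A \<and> A \<noteq> {} \<and> length s = card A"
    and lam: "0 < lam"
    and H: "\<And>T t. finite T \<Longrightarrow> (\<Sum>p\<in>{p\<in>F. t \<in> fst p \<and> fst p \<subseteq> T}. (1/lam)^card (fst p)) \<le> 2/lam - 1"
  shows "finite S \<Longrightarrow> t \<notin> S \<Longrightarrow> lam * Zc F S \<le> Zc F (insert t S)"
proof -
  have Ffin: "\<forall>(A,s)\<in>F. finite A" using F by auto
  have main: "\<forall>S t. finite S \<and> card S = n \<and> t \<notin> S \<longrightarrow> lam * Zc F S \<le> Zc F (insert t S)" for n
  proof (induction n rule: less_induct)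
    case (less n)
    have chain: "lam ^ card D * Zc F T \<le> Zc F (T \<union> D)"
      if "finite T" "finite D" "T \<inter> D = {}" "card (T \<union> D) \<le> n" for T D
      using that(2,3,4)
    proof (induction D rule: finite_induct)
      case empty show ?case by simp
    next
      case (insert d D)
      have dn: "d \<notin> T \<union> D" using insert by auto
      have c1: "card (T \<union> insert d D) = Suc (card (T \<union> D))"
        using dn \<open>finite T\<close> insert(1) by simp
      have lt: "card (T \<union> D) < n" using c1 insert(5) by simp
      have ih1: "lam ^ card D * Zc F T \<le> Zc F (T \<union> D)"
      proof -
        have "T \<inter> D = {}" using insert.prems(1) by auto
        then show ?thesis using insert.IH lt by simp
      qed
      have ih2: "lam * Zc F (T \<union> D) \<le> Zc F (insert d (T \<union> D))"
        using less.IH[OF lt] dn \<open>finite T\<close> insert(1) by blast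
      have "lam ^ card (insert d D) * Zc F T = lam * (lam ^ card D * Zc F T)"
        using insert(1,2) by simp
      also have "\<dots> \<le> lam * Zc F (T \<union> D)" using ih1 lam by simp
      also have "\<dots> \<le> Zc F (insert d (T \<union> D))" by (rule ih2)
      finally show ?case by simp
    qed
    show ?case
    proof (intro allI impI)
      fix S :: "nat set" and t :: nat assume St: "finite S \<and> card S = n \<and> t \<notin> S"
      define S' where "S' = insert t S"
      define G where "G = {x \<in> asg S. goodF F S x}"
      define G' where "G' = {x \<in> asg S'. goodF F S' x}"
      define P where "P = {p\<in>F. t \<in> fst p \<and> fst p \<subseteq> S'}"
      define E where "E p = {x. \<exists>y\<in>G. \<exists>b. x = y(t:=b) \<and> restr x (fst p) = snd p}" for p
      define X where "X = (\<lambda>(y,b). y(t:=b)) ` (G \<times> (UNIV::bool set))"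
      have finS: "finite S" and tS: "t \<notin> S" using St by auto
      have finS': "finite S'" using finS by (simp add: S'_def)
      have finG: "finite G" using finite_asg[OF finS] by (simp add: G_def)
      have finG': "finite G'" using finite_asg[OF finS'] by (simp add: G'_def)
      have inj: "inj_on (\<lambda>(y,b). y(t:=b)) (G \<times> (UNIV::bool set))"
      proof (rule inj_onI, clarify)
        fix y b y' b' assume "y \<in> G" "y' \<in> G" and eq: "y(t := b) = y'(t := b')"
        then have "\<not> y t" "\<not> y' t" using tS by (auto simp: G_def asg_def)
        have "b = b'" using fun_cong[OF eq, of t] by simp
        moreover have "y = y'"
        proof
          fix i show "y i = y' i"
            using fun_cong[OF eq, of i] \<open>\<not> y t\<close> \<open>\<not> y' t\<close> by (cases "i = t") auto
        qed
        ultimately show "y = y' \<and> b = b'" by simp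
      qed
      have cardX: "card X = 2 * card G"
        unfolding X_def using card_image[OF inj] finG by (simp add: card_cartesian_product)
      have finP: "finite P"
      proof -
        have "P \<subseteq> Pow S' \<times> {xs. set xs \<subseteq> UNIV \<and> length xs \<le> card S'}"
        proof
          fix p assume "p \<in> P"
          then obtain A s where p: "p = (A,s)" "(A,s) \<in> F" "t \<in> A" "A \<subseteq> S'"
            by (cases p) (auto simp: P_def)
          have "card A \<le> card S'" using p finS' card_mono by blast
          then show "p \<in> Pow S' \<times> {xs. set xs \<subseteq> UNIV \<and> length xs \<le> card S'}"
            using p F by auto
        qed
        moreover have "finite (Pow S' \<times> {xs::bool list. set xs \<subseteq> UNIV \<and> length xs \<le> card S'})"
          using finS' finite_lists_length_le[of "UNIV::bool set"] by simp
        ultimately show ?thesis by (rule finite_subset)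
      qed
      have XU: "X \<subseteq> G' \<union> (\<Union>p\<in>P. E p)"
      proof
        fix x assume "x \<in> X"
        then obtain y b where y: "y \<in> G" and xdef: "x = y(t:=b)" by (auto simp: X_def)
        have xa: "x \<in> asg S'" using y by (auto simp: xdef G_def asg_def S'_def)
        show "x \<in> G' \<union> (\<Union>p\<in>P. E p)"
        proof (cases "goodF F S' x")
          case True then show ?thesis using xa by (simp add: G'_def)
        next
          case False
          then obtain A s where As: "(A,s) \<in> F" "A \<subseteq> S'" "restr x A = s"
            unfolding goodF_def by blast
          have "t \<in> A"
          proof (rule ccontr)
            assume "t \<notin> A"
            then have "A \<subseteq> S" using As(2) by (auto simp: S'_def)
            have "restr x A = restr y A"
              using \<open>t \<notin> A\<close> As(1) Ffin by (intro restr_cong) (auto simp: xdef)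
            then show False using y As \<open>A \<subseteq> S\<close> by (auto simp: G_def goodF_def)
          qed
          then have "(A,s) \<in> P" using As by (simp add: P_def)
          moreover have "x \<in> E (A,s)" using y xdef As(3) by (auto simp: E_def)
          ultimately show ?thesis by blast
        qed
      qed
      have finX: "finite X" using finG by (simp add: X_def)
      have cardE: "real (card (E p)) \<le> lam * (1/lam)^card (fst p) * Zc F S" if pP: "p \<in> P" for p
      proof -
        obtain A s where p: "p = (A,s)" "(A,s) \<in> F" "t \<in> A" "A \<subseteq> S'"
          using pP by (cases p) (auto simp: P_def)
        have finA: "finite A" and Ane: "A \<noteq> {}" using p F by auto
        define h where "h x = (\<lambda>i. if i \<in> S - A then x i else False)" for x :: "nat \<Rightarrow> bool"
        have "inj_on h (E p)"
        proof (rule inj_onI)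
          fix x x' assume x: "x \<in> E p" and x': "x' \<in> E p" and hx: "h x = h x'"
          obtain y b where y: "y \<in> G" "x = y(t:=b)" "restr x A = s" using x p by (auto simp: E_def)
          obtain y' b' where y': "y' \<in> G" "x' = y'(t:=b')" "restr x' A = s" using x' p by (auto simp: E_def)
          show "x = x'"
          proof
            fix i
            show "x i = x' i"
            proof (cases "i \<in> A")
              case True then show ?thesis using restr_eqD[OF finA, of x x'] y y' by simp
            next
              case False
              show ?thesis
              proof (cases "i \<in> S")
                case True then show ?thesis using fun_cong[OF hx, of i] False by (simp add: h_def)
              next
                case False': False
                then have "i \<noteq> t" using p False by auto
                then show ?thesis using y y' False' by (auto simp: G_def asg_def)
              qed
            qed
          qed
        qed
        moreover have "h ` E p \<subseteq> {z \<in> asg (S - A). goodF F (S - A) z}"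
        proof
          fix z assume "z \<in> h ` E p"
          then obtain x y b where z: "z = h x" "y \<in> G" "x = y(t:=b)" by (auto simp: E_def)
          have "z \<in> asg (S - A)" using z(1) by (auto simp: h_def asg_def)
          moreover have "goodF F (S - A) z"
          proof (rule goodF_cong[OF Ffin])
            show "goodF F (S - A) y" using z(2) goodF_mono[of "S - A" S F y] by (auto simp: G_def)
            show "\<forall>i\<in>S - A. y i = z i" using z p tS by (auto simp: h_def)
          qed
          ultimately show "z \<in> {z \<in> asg (S - A). goodF F (S - A) z}" by blast
        qed
        ultimately have c1: "card (E p) \<le> Zc F (S - A)"
          unfolding Zc_def
          by (intro card_inj_on_le) (auto intro: finite_subset[OF _ finite_asg] simp: finS)
        have ch: "lam ^ card (A - {t}) * Zc F (S - A) \<le> Zc F ((S - A) \<union> (A - {t}))"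
        proof (rule chain)
          show "finite (S - A)" "finite (A - {t})" using finS finA by auto
          show "(S - A) \<inter> (A - {t}) = {}" by auto
          have "(S - A) \<union> (A - {t}) = S" using p tS by (auto simp: S'_def)
          then show "card ((S - A) \<union> (A - {t})) \<le> n" using St by simp
        qed
        have SA: "(S - A) \<union> (A - {t}) = S" using p tS by (auto simp: S'_def)
        have cA: "card (A - {t}) = card A - 1" using p finA by simp
        have cApos: "card A \<ge> 1" using finA Ane by (simp add: Suc_le_eq card_gt_0_iff)
        obtain m where m: "card A = Suc m" using cApos by (cases "card A") auto
        have "real (card (E p)) \<le> Zc F (S - A)" using c1 by simp
        also have "\<dots> = (1/lam)^(card A - 1) * (lam ^ (card A - 1) * Zc F (S - A))"
          using lam by (simp add: power_one_over field_simps)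
        also have "\<dots> \<le> (1/lam)^(card A - 1) * Zc F S"
          using ch SA cA lam by (intro mult_left_mono) auto
        also have "\<dots> = lam * (1/lam)^card A * Zc F S"
          using m lam by simp
        finally show ?thesis using p by simp
      qed
      have "card X \<le> card (G' \<union> (\<Union>p\<in>P. E p))"
      proof (rule card_mono)
        have "E p \<subseteq> X" for p by (auto simp: E_def X_def)
        then have "finite (E p)" for p using finX finite_subset by blast
        then show "finite (G' \<union> (\<Union>p\<in>P. E p))" using finG' finP by blast
      qed (rule XU)
      also have "\<dots> \<le> card G' + card (\<Union>p\<in>P. E p)" by (rule card_Un_le)
      also have "\<dots> \<le> card G' + (\<Sum>p\<in>P. card (E p))"
        using card_UN_le[OF finP, of E] by simp
      finally have cnt: "real (2 * card G) \<le> real (card G') + (\<Sum>p\<in>P. real (card (E p)))"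
        using cardX by (metis of_nat_add of_nat_le_iff of_nat_sum)
      have "(\<Sum>p\<in>P. real (card (E p))) \<le> (\<Sum>p\<in>P. lam * (1/lam)^card (fst p) * Zc F S)"
        by (rule sum_mono) (rule cardE)
      also have "\<dots> = lam * Zc F S * (\<Sum>p\<in>P. (1/lam)^card (fst p))"
        by (simp add: sum_distrib_left mult.assoc mult.commute[of "(1/lam)^_"])
      also have "\<dots> \<le> lam * Zc F S * (2/lam - 1)"
        using H[OF finS', of t] lam by (intro mult_left_mono) (auto simp: P_def)
      also have "\<dots> = 2 * Zc F S - lam * Zc F S" using lam by (simp add: field_simps)
      finally have "real (2 * card G) \<le> real (card G') + (2 * Zc F S - lam * Zc F S)"
        using cnt by linarith
      then show "lam * Zc F S \<le> Zc F (insert t S)"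
        by (simp add: Zc_def G_def G'_def S'_def)
    qed
  qed
  then show "finite S \<Longrightarrow> t \<notin> S \<Longrightarrow> lam * Zc F S \<le> Zc F (insert t S)" by blast
qed


lemma Zc_pos:
  fixes lam :: real
  assumes F: "\<forall>(A,s)\<in>F. finite A \<and> A \<noteq> {} \<and> length s = card A"
    and lam: "0 < lam"
    and H: "\<And>T t. finite T \<Longrightarrow> (\<Sum>p\<in>{p\<in>F. t \<in> fst p \<and> fst p \<subseteq> T}. (1/lam)^card (fst p)) \<le> 2/lam - 1"
  shows "finite S \<Longrightarrow> Zc F S > 0"
proof (induction S rule: finite_induct)
  case empty
  have "\<forall>(A,s)\<in>F. A \<noteq> {}" using F by auto
  then show ?case using Zc_empty[of F] by simp
next
  case (insert t S)
  have "lam * Zc F S \<le> Zc F (insert t S)" by (rule lll_step[OF F lam H insert(1,2)])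
  moreover have "lam * Zc F S > 0" using insert(3) lam by simp
  ultimately show ?case by simp
qed

definition extF :: "(nat set \<times> bool list) set \<Rightarrow> bool list \<Rightarrow> bool" where
  "extF F l \<longleftrightarrow> (\<forall>m. \<exists>y. goodF F {..<m} y \<and> (\<forall>i<length l. y i = l ! i))"

fun prefF :: "(nat set \<times> bool list) set \<Rightarrow> nat \<Rightarrow> bool list" where
  "prefF F 0 = []"
| "prefF F (Suc n) = (if extF F (prefF F n @ [True]) then prefF F n @ [True] else prefF F n @ [False])"

lemma extF_step:
  assumes "extF F l" shows "extF F (l @ [True]) \<or> extF F (l @ [False])"
proof (rule ccontr)
  assume "\<not> (extF F (l @ [True]) \<or> extF F (l @ [False]))"
  then obtain m1 m2 where
    m1: "\<forall>y. goodF F {..<m1} y \<longrightarrow> \<not> (\<forall>i<length (l @ [True]). y i = (l @ [True]) ! i)" and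
    m2: "\<forall>y. goodF F {..<m2} y \<longrightarrow> \<not> (\<forall>i<length (l @ [False]). y i = (l @ [False]) ! i)"
    unfolding extF_def by blast
  define m where "m = max m1 m2"
  obtain y where y: "goodF F {..<m} y" "\<forall>i<length l. y i = l ! i"
    using assms unfolding extF_def by blast
  have match: "\<forall>i<length (l @ [y (length l)]). y i = (l @ [y (length l)]) ! i"
    using y(2) by (auto simp: nth_append less_Suc_eq)
  show False
  proof (cases "y (length l)")
    case True
    have "goodF F {..<m1} y" using y(1) goodF_mono[of "{..<m1}" "{..<m}"] by (auto simp: m_def)
    then show False using m1 match True by auto
  next
    case False
    have "goodF F {..<m2} y" using y(1) goodF_mono[of "{..<m2}" "{..<m}"] by (auto simp: m_def)
    then show False using m2 match False by auto
  qed
qed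

lemma prefF_len: "length (prefF F n) = n"
  by (induction n) auto

lemma prefF_ext: "extF F [] \<Longrightarrow> extF F (prefF F n)"
  by (induction n) (use extF_step in auto)

lemma prefF_take: "n \<le> m \<Longrightarrow> take n (prefF F m) = prefF F n"
proof (induction m)
  case 0 then show ?case by simp
next
  case (Suc m)
  show ?case
  proof (cases "n = Suc m")
    case True then show ?thesis using prefF_len[of F "Suc m"] by simp
  next
    case False
    then have "n \<le> m" using Suc by simp
    then show ?thesis using Suc prefF_len[of F m] by auto
  qed
qed

lemma compactness:
  assumes Ffin: "\<forall>(A,s)\<in>F. finite A" and ex: "\<forall>n. \<exists>y. goodF F {..<n} y"
  shows "\<exists>\<omega>. \<forall>(A,s)\<in>F. restr \<omega> A \<noteq> s"
proof -
  have e0: "extF F []" using ex by (simp add: extF_def)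
  define \<omega> where "\<omega> i = prefF F (Suc i) ! i" for i
  have om: "\<omega> i = prefF F n ! i" if "i < n" for i n
  proof -
    have "prefF F (Suc i) = take (Suc i) (prefF F n)" using prefF_take[of "Suc i" n F] that by simp
    then show ?thesis using that by (simp add: \<omega>_def)
  qed
  have "restr \<omega> A \<noteq> s" if As: "(A,s) \<in> F" for A s
  proof -
    have finA: "finite A" using Ffin As by auto
    then obtain n where n: "A \<subseteq> {..<n}" using finite_nat_iff_bounded by blast
    obtain y where y: "goodF F {..<n} y" "\<forall>i<length (prefF F n). y i = prefF F n ! i"
      using prefF_ext[OF e0, of n] unfolding extF_def by blast
    have "restr \<omega> A = restr y A"
      using finA n y(2) om by (intro restr_cong) (auto simp: prefF_len)
    moreover have "restr y A \<noteq> s" using y(1) As n by (auto simp: goodF_def)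
    ultimately show ?thesis by simp
  qed
  then show ?thesis by blast
qed


lemma str_code_inj: "str_code a = str_code b \<Longrightarrow> a = b"
proof (induction a arbitrary: b)
  case Nil then show ?case by (cases b) (auto split: if_splits)
next
  case (Cons x a)
  then show ?case
  proof (cases b)
    case Nil then show ?thesis using Cons by (auto split: if_splits)
  next
    case (Cons y b')
    have e: "2 * str_code a + (if x then 2 else 1) = 2 * str_code b' + (if y then 2 else 1)"
      using Cons.prems Cons by simp
    have "x = y"
    proof (rule ccontr)
      assume "x \<noteq> y"
      then have "odd (2 * str_code a + (if x then 2 else 1)) \<noteq> odd (2 * str_code b' + (if y then 2 else 1))"
        by auto
      with e show False by simp
    qed
    with e have "str_code a = str_code b'" by auto
    then show ?thesis using Cons.IH Cons \<open>x = y\<close> by auto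
  qed
qed

lemma set_code_eq: "set_code = set_encode"
  by (simp add: fun_eq_iff set_code_def set_encode_def)

lemma restr_len: "finite A \<Longrightarrow> length (restr \<omega> A) = card A"
  by (simp add: restr_def)

lemma ceil_bound: "0 \<le> x \<Longrightarrow> real (nat \<lceil>x\<rceil>) \<le> x + 1"
proof -
  assume "0 \<le> x"
  have "real_of_int \<lceil>x\<rceil> - 1 < x" using ceiling_correct[of x] by blast
  moreover have "\<lceil>x\<rceil> \<ge> 0" using \<open>0 \<le> x\<close> by simp
  moreover have "real (nat \<lceil>x\<rceil>) = real_of_int \<lceil>x\<rceil>" using calculation(2) by (rule of_nat_nat)
  ultimately show ?thesis by linarith
qed


theorem theorem1:
  fixes \<gamma> :: real and U :: recf
  assumes "0 < \<gamma>" and "\<gamma> < 1"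
    and "optimal_prefix_machine U"
  shows "\<exists>(\<omega>::nat \<Rightarrow> bool) (N::nat). \<forall>A::nat set. finite A \<and> card A \<ge> N \<longrightarrow>
           (\<exists>t\<in>A. enat (nat \<lceil>\<gamma> * real (card A)\<rceil>)
                     \<le> KC U (prod_encode (set_code A, str_code (restr \<omega> A))) t)"
proof -
  define q where "q = (2::real) powr (-(1+\<gamma>)/2)"
  define lam where "lam = 1 / q"
  define r where "r = 2 powr \<gamma> * q"
  have q0: "q > 0" by (simp add: q_def)
  have lam0: "lam > 0" using q0 by (simp add: lam_def)
  have qhalf: "2 * q - 1 > 0"
  proof -
    have "(2::real) powr (-1) < 2 powr (-(1+\<gamma>)/2)"
      using assms(2) by (intro powr_less_mono) auto
    then show ?thesis by (simp add: q_def powr_minus)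
  qed
  have r_eq: "r = 2 powr ((\<gamma> - 1)/2)"
    unfolding r_def q_def by (simp add: powr_add[symmetric] field_simps)
  have r0: "r > 0" by (simp add: r_eq)
  have r1: "r < 1"
  proof -
    have "(2::real) powr ((\<gamma> - 1)/2) < 2 powr 0"
      using assms(2) by (intro powr_less_mono) auto
    then show ?thesis by (simp add: r_eq)
  qed
  define \<delta> where "\<delta> = (2*q - 1) * (1 - r) / 4"
  have \<delta>0: "\<delta> > 0" using qhalf r1 by (simp add: \<delta>_def)
  obtain n0 where n0: "r ^ n0 < \<delta>" using real_arch_pow_inv[OF \<delta>0 r1] by blast
  define N where "N = Suc n0"
  have rN: "r ^ N \<le> \<delta>"
  proof -
    have "r ^ N = r * r ^ n0" by (simp add: N_def)
    also have "\<dots> \<le> r ^ n0" using r0 r1 by (intro mult_left_le_one_le) auto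
    finally show ?thesis using n0 by simp
  qed
  define c where "c k = nat \<lceil>\<gamma> * real k\<rceil>" for k :: nat
  define code where "code A s = prod_encode (set_code A, str_code s)" for A s
  define F where "F = {(A,s). finite A \<and> N \<le> card A \<and> length s = card A \<and>
      (\<forall>t\<in>A. KC U (code A s) t < enat (c (card A)))}"
  have Fp: "\<forall>(A,s)\<in>F. finite A \<and> A \<noteq> {} \<and> length s = card A"
    by (auto simp: F_def N_def)
  have H: "(\<Sum>p\<in>{p\<in>F. t \<in> fst p \<and> fst p \<subseteq> T}. (1/lam)^card (fst p)) \<le> 2/lam - 1"
    if finT: "finite T" for T t
  proof -
    define P where "P = {p\<in>F. t \<in> fst p \<and> fst p \<subseteq> T}"
    define g where "g p = card (fst p)" for p :: "nat set \<times> bool list"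
    have finP: "finite P"
    proof -
      have "P \<subseteq> Pow T \<times> {xs. set xs \<subseteq> UNIV \<and> length xs \<le> card T}"
      proof
        fix p assume "p \<in> P"
        then obtain A s where p: "p = (A,s)" "(A,s) \<in> F" "A \<subseteq> T"
          by (cases p) (auto simp: P_def)
        have "card A \<le> card T" using p finT card_mono by blast
        then show "p \<in> Pow T \<times> {xs. set xs \<subseteq> UNIV \<and> length xs \<le> card T}"
          using p Fp by auto
      qed
      moreover have "finite (Pow T \<times> {xs::bool list. set xs \<subseteq> UNIV \<and> length xs \<le> card T})"
        using finT finite_lists_length_le[of "UNIV::bool set"] by simp
      ultimately show ?thesis by (rule finite_subset)
    qed
    have cnt: "card {p\<in>P. g p = k} \<le> 2 ^ Suc (c k)" for k
    proof -
      have inj: "inj_on (\<lambda>p. code (fst p) (snd p)) {p\<in>P. g p = k}"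
      proof (rule inj_onI)
        fix p p' assume p: "p \<in> {p\<in>P. g p = k}" and p': "p' \<in> {p\<in>P. g p = k}"
          and e: "code (fst p) (snd p) = code (fst p') (snd p')"
        have fA: "finite (fst p)" "finite (fst p')" using p p' Fp by (auto simp: P_def)
        have "set_code (fst p) = set_code (fst p')" "str_code (snd p) = str_code (snd p')"
          using e by (auto simp: code_def prod_encode_eq)
        then have "fst p = fst p'" "snd p = snd p'"
          using fA by (auto simp: set_code_eq set_encode_eq intro: str_code_inj)
        then show "p = p'" by (simp add: prod_eq_iff)
      qed
      have sub: "(\<lambda>p. code (fst p) (snd p)) ` {p\<in>P. g p = k} \<subseteq> {x. KC U x t < enat (c k)}"
        by (auto simp: P_def F_def g_def)
      have "card {p\<in>P. g p = k} = card ((\<lambda>p. code (fst p) (snd p)) ` {p\<in>P. g p = k})"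
        by (rule card_image[OF inj, symmetric])
      also have "\<dots> \<le> card {x. KC U x t < enat (c k)}"
        using KC_count[of U t "c k"] sub by (intro card_mono) auto
      also have "\<dots> \<le> 2 ^ Suc (c k)" using KC_count[of U t "c k"] by simp
      finally show ?thesis .
    qed
    have term_bd: "real (2 ^ Suc (c k)) * q ^ k \<le> 4 * r ^ k" for k
    proof -
      have "real (c k) \<le> \<gamma> * real k + 1"
        unfolding c_def using assms(1) by (intro ceil_bound) simp
      then have "(2::real) powr real (c k) \<le> 2 powr (\<gamma> * real k + 1)"
        by (intro powr_mono) auto
      then have "(2::real) ^ c k \<le> 2 * (2 powr \<gamma>) ^ k"
        by (simp add: powr_realpow powr_add powr_power mult.commute)
      then have "real (2 ^ Suc (c k)) \<le> 4 * (2 powr \<gamma>) ^ k" by simp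
      then have "real (2 ^ Suc (c k)) * q ^ k \<le> 4 * (2 powr \<gamma>) ^ k * q ^ k"
        using q0 by (intro mult_right_mono) auto
      also have "\<dots> = 4 * r ^ k" by (simp add: r_def power_mult_distrib)
      finally show ?thesis .
    qed
    have "(\<Sum>p\<in>P. q ^ card (fst p)) = (\<Sum>k\<in>g ` P. \<Sum>p\<in>{p\<in>P. g p = k}. q ^ card (fst p))"
      by (rule sum.image_gen[OF finP])
    also have "\<dots> = (\<Sum>k\<in>g ` P. real (card {p\<in>P. g p = k}) * q ^ k)"
      by (intro sum.cong refl) (simp add: g_def)
    also have "\<dots> \<le> (\<Sum>k\<in>g ` P. real (2 ^ Suc (c k)) * q ^ k)"
      using q0 cnt by (intro sum_mono mult_right_mono) (auto simp del: power_Suc of_nat_power)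
    also have "\<dots> \<le> (\<Sum>k\<in>{N..card T}. real (2 ^ Suc (c k)) * q ^ k)"
    proof (rule sum_mono2)
      show "g ` P \<subseteq> {N..card T}"
      proof
        fix k assume "k \<in> g ` P"
        then obtain A s where "(A,s) \<in> F" "A \<subseteq> T" "k = card A"
          by (auto simp: g_def P_def)
        then show "k \<in> {N..card T}" using finT card_mono by (auto simp: F_def)
      qed
    qed (use q0 in auto)
    also have "\<dots> \<le> (\<Sum>k\<in>{N..card T}. 4 * r ^ k)"
      by (intro sum_mono term_bd)
    also have "\<dots> = 4 * (\<Sum>k=N..card T. r ^ k)" by (simp add: sum_distrib_left)
    also have "\<dots> \<le> 4 * (r ^ N / (1 - r))"
    proof -
      have "(\<Sum>k=N..card T. r ^ k) \<le> r ^ N / (1 - r)"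
      proof (cases "card T < N")
        case True then show ?thesis using r0 r1 by simp
      next
        case False
        then have "(\<Sum>k=N..card T. r ^ k) = (r ^ N - r ^ Suc (card T)) / (1 - r)"
          using r1 by (simp add: sum_gp)
        also have "\<dots> \<le> r ^ N / (1 - r)" using r0 r1 by (intro divide_right_mono) auto
        finally show ?thesis .
      qed
      then show ?thesis by simp
    qed
    also have "\<dots> \<le> 2 * q - 1"
    proof -
      have "4 * (r ^ N / (1 - r)) \<le> 4 * (\<delta> / (1 - r))"
        using rN r1 by (intro mult_left_mono divide_right_mono) auto
      also have "\<dots> = 2 * q - 1" using r1 by (simp add: \<delta>_def field_simps)
      finally show ?thesis .
    qed
    finally show ?thesis by (simp add: P_def lam_def)
  qed
  have exg: "\<forall>n. \<exists>y. goodF F {..<n} y"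
  proof
    fix n
    have "Zc F {..<n} > 0" by (rule Zc_pos[OF Fp lam0 H]) auto
    then have "{x \<in> asg {..<n}. goodF F {..<n} x} \<noteq> {}" unfolding Zc_def by (metis card.empty less_irrefl)
    then show "\<exists>y. goodF F {..<n} y" by blast
  qed
  obtain \<omega> where om: "\<forall>(A,s)\<in>F. restr \<omega> A \<noteq> s"
    using compactness[OF _ exg] Fp by auto
  have "\<exists>t\<in>A. enat (nat \<lceil>\<gamma> * real (card A)\<rceil>)
                     \<le> KC U (prod_encode (set_code A, str_code (restr \<omega> A))) t"
    if A: "finite A" "card A \<ge> N" for A
  proof -
    have "(A, restr \<omega> A) \<notin> F" using om by auto
    then have "\<not> (\<forall>t\<in>A. KC U (code A (restr \<omega> A)) t < enat (c (card A)))"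
      using A restr_len[OF A(1)] by (auto simp: F_def)
    then show ?thesis by (auto simp: code_def c_def not_less)
  qed
  then show ?thesis by blast
qed

end
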